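(* Let $1\le p<\infty$, $\alpha>0$, $m>0$. The Hardy operator $Hf(z)=\frac1z\int_0^zf(w)\,dw$ is not supercyclic on $\mathcal{F}^p_{(\alpha,m)}$.
   Context: For $\alpha>0$, $m>0$ and $1\le p<\infty$, $\mathcal{F}^p_{(\alpha,m)}$ denotes the Banach space of entire functions $f$ on $\mathbb{C}$ with $\|f\|_{(p,\alpha,m)}^p=\int_{\mathbb{C}}|f(z)|^pe^{-p\alpha|z|^m}\,dA(z)<\infty$, where $dA$ is Lebesgue area measure. $Hf(0)$ is understood as $f(0)$. An operator $T$ on a Banach space $X$ is supercyclic if there is $x\in X$ with $\{\lambda T^nx:n\ge0,\lambda\in\mathbb{C}\}$ dense in $X$. *)

theory Defs
  imports "HOL-Complex_Analysis.Complex_Analysis"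
begin

definition fock_space :: "real \<Rightarrow> real \<Rightarrow> real \<Rightarrow> (complex \<Rightarrow> complex) set" where
  "fock_space p \<alpha> m =
     {f. f holomorphic_on UNIV \<and>
         integrable lborel (\<lambda>z. norm (f z) powr p * exp (- p * \<alpha> * norm z powr m))}"

definition fock_norm :: "real \<Rightarrow> real \<Rightarrow> real \<Rightarrow> (complex \<Rightarrow> complex) \<Rightarrow> real" where
  "fock_norm p \<alpha> m f =
     (integral\<^sup>L lborel (\<lambda>z. norm (f z) powr p * exp (- p * \<alpha> * norm z powr m))) powr (1 / p)"

definition hardy :: "(complex \<Rightarrow> complex) \<Rightarrow> complex \<Rightarrow> complex" where
  "hardy f z = (if z = 0 then f 0 else contour_integral (linepath 0 z) f / z)"

definition supercyclic_on ::
  "(complex \<Rightarrow> complex) set \<Rightarrow> ((complex \<Rightarrow> complex) \<Rightarrow> real)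
     \<Rightarrow> ((complex \<Rightarrow> complex) \<Rightarrow> (complex \<Rightarrow> complex)) \<Rightarrow> bool" where
  "supercyclic_on X N T \<longleftrightarrow>
     (\<exists>x\<in>X. (\<forall>n. (T ^^ n) x \<in> X) \<and>
        (\<forall>g\<in>X. \<forall>\<epsilon>>0. \<exists>n c. N (\<lambda>z. c * (T ^^ n) x z - g z) < \<epsilon>))"

end

theory Submission
  imports Defs "HOL-Probability.Probability" "HOL-Real_Asymp.Real_Asymp"
begin


lemma measurable_Complex_pair[measurable]:
  "(\<lambda>z::real\<times>real. Complex (fst z) (snd z)) \<in> borel_measurable (lborel \<Otimes>\<^sub>M lborel)"
  unfolding Complex_eq by measurable

lemma nn_integral_complex_cart:
  fixes F :: "complex \<Rightarrow> ennreal" assumes [measurable]: "F \<in> borel_measurable borel"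
  shows "(\<integral>\<^sup>+z. F z \<partial>lborel) = (\<integral>\<^sup>+x. \<integral>\<^sup>+y. F (Complex x y) \<partial>lborel \<partial>lborel)"
proof -
  interpret P: product_sigma_finite "\<lambda>b::complex. lborel::real measure"
    by (simp add: product_sigma_finite_def lborel.sigma_finite_measure_axioms)
  have e: "\<And>a b::real. a *\<^sub>R (1::complex) + b *\<^sub>R \<i> = Complex a b" by (simp add: complex_eq_iff)
  have "(\<integral>\<^sup>+z. F z \<partial>lborel) = (\<integral>\<^sup>+f. F (\<Sum>b\<in>Basis. f b *\<^sub>R b) \<partial>(PiM Basis (\<lambda>b. lborel)))"
    by (subst lborel_eq) (simp add: nn_integral_distr)
  also have "\<dots> = (\<integral>\<^sup>+f. F (Complex (f 1) (f \<i>)) \<partial>(PiM {1,\<i>} (\<lambda>b. lborel)))"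
    by (simp add: Basis_complex_def e)
  also have "\<dots> = (\<integral>\<^sup>+z. F (Complex (fst z) (snd z)) \<partial>(lborel \<Otimes>\<^sub>M lborel))"
    by (rule P.product_nn_integral_pair) (auto simp: complex_eq_iff)
  also have "\<dots> = (\<integral>\<^sup>+x. \<integral>\<^sup>+y. F (Complex x y) \<partial>lborel \<partial>lborel)"
    by (subst lborel.nn_integral_fst[symmetric]) simp_all
  finally show ?thesis .
qed

lemma nn_integral_complex_cart2:
  fixes F :: "complex \<Rightarrow> ennreal" assumes [measurable]: "F \<in> borel_measurable borel"
  shows "(\<integral>\<^sup>+z. F z \<partial>lborel) = (\<integral>\<^sup>+y. \<integral>\<^sup>+x. F (Complex x y) \<partial>lborel \<partial>lborel)"
proof -
  have Q: "pair_sigma_finite (lborel::real measure) (lborel::real measure)"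
    by (simp add: pair_sigma_finite_def lborel.sigma_finite_measure_axioms)
  show ?thesis unfolding nn_integral_complex_cart[OF assms]
    by (subst pair_sigma_finite.Fubini'[OF Q]) simp_all
qed

lemma nn_integral_real_shift:
  fixes G :: "real \<Rightarrow> ennreal" assumes [measurable]: "G \<in> borel_measurable borel"
  shows "(\<integral>\<^sup>+x. G (x + c) \<partial>lborel) = (\<integral>\<^sup>+x. G x \<partial>lborel)"
proof -
  have "(\<integral>\<^sup>+x. G x \<partial>lborel) = (\<integral>\<^sup>+x. G x \<partial>(distr lborel borel ((+) c)))"
    by (simp add: lborel_distr_plus)
  also have "\<dots> = (\<integral>\<^sup>+x. G (c + x) \<partial>lborel)"
    by (simp add: nn_integral_distr)
  finally show ?thesis by (simp add: add.commute)
qed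

lemma shear_x:
  fixes F :: "complex \<Rightarrow> ennreal" assumes [measurable]: "F \<in> borel_measurable borel"
  shows "(\<integral>\<^sup>+z. F (z + of_real (a * Im z)) \<partial>lborel) = (\<integral>\<^sup>+z. F z \<partial>lborel)"
proof -
  have e: "\<And>x y. Complex x y + of_real (a * Im (Complex x y)) = Complex (x + a*y) y"
    by (simp add: complex_eq_iff)
  have "(\<integral>\<^sup>+z. F (z + of_real (a * Im z)) \<partial>lborel) = (\<integral>\<^sup>+y. \<integral>\<^sup>+x. F (Complex (x + a*y) y) \<partial>lborel \<partial>lborel)"
    by (subst nn_integral_complex_cart2) (measurable, simp only: e)
  also have "\<dots> = (\<integral>\<^sup>+y. \<integral>\<^sup>+x. F (Complex x y) \<partial>lborel \<partial>lborel)"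
    by (rule nn_integral_cong, rule nn_integral_real_shift[where G = "\<lambda>x. F (Complex x _)"]) (simp add: Complex_eq)
  also have "\<dots> = (\<integral>\<^sup>+z. F z \<partial>lborel)"
    by (rule nn_integral_complex_cart2[symmetric]) simp
  finally show ?thesis .
qed

lemma shear_y:
  fixes F :: "complex \<Rightarrow> ennreal" assumes [measurable]: "F \<in> borel_measurable borel"
  shows "(\<integral>\<^sup>+z. F (z + \<i> * of_real (b * Re z)) \<partial>lborel) = (\<integral>\<^sup>+z. F z \<partial>lborel)"
proof -
  have e: "\<And>x y. Complex x y + \<i> * of_real (b * Re (Complex x y)) = Complex x (y + b*x)"
    by (simp add: complex_eq_iff)
  have "(\<integral>\<^sup>+z. F (z + \<i> * of_real (b * Re z)) \<partial>lborel) = (\<integral>\<^sup>+x. \<integral>\<^sup>+y. F (Complex x (y + b*x)) \<partial>lborel \<partial>lborel)"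
    by (subst nn_integral_complex_cart) (measurable, simp only: e)
  also have "\<dots> = (\<integral>\<^sup>+x. \<integral>\<^sup>+y. F (Complex x y) \<partial>lborel \<partial>lborel)"
    by (rule nn_integral_cong, rule nn_integral_real_shift[where G = "\<lambda>y. F (Complex _ y)"]) (simp add: Complex_eq)
  also have "\<dots> = (\<integral>\<^sup>+z. F z \<partial>lborel)"
    by (rule nn_integral_complex_cart[symmetric]) simp
  finally show ?thesis .
qed

lemma rotation_aux:
  fixes F :: "complex \<Rightarrow> ennreal" assumes [measurable]: "F \<in> borel_measurable borel"
    and u: "norm u = 1" "u \<noteq> -1"
  shows "(\<integral>\<^sup>+z. F (u * z) \<partial>lborel) = (\<integral>\<^sup>+z. F z \<partial>lborel)"
proof -
  define c where "c = Re u"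
  define s where "s = Im u"
  have cs: "c^2 + s^2 = 1" using u(1) unfolding c_def s_def norm_complex_def
    by (metis real_sqrt_eq_1_iff)
  have "c \<noteq> -1"
  proof
    assume "c = -1" then have "s = 0" using cs by (simp add: power2_eq_square)
    then show False using u(2) \<open>c = -1\<close> unfolding c_def s_def by (simp add: complex_eq_iff)
  qed
  then have c1: "1 + c \<noteq> 0" by linarith
  define t where "t = - s / (1 + c)"
  define Sx where "Sx = (\<lambda>z. z + of_real (t * Im z))"
  define Sy where "Sy = (\<lambda>z. z + \<i> * of_real (s * Re z))"
  have eq: "u * z = Sx (Sy (Sx z))" for z
  proof -
    have u': "u = Complex c s" by (simp add: c_def s_def)
    have s2: "s^2 = 1 - c^2" using cs by simp
    have k1: "s * t = c - 1" unfolding t_def using c1 s2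
      by (simp add: field_simps power2_eq_square)
    have k2: "t * (1 + c) = - s" unfolding t_def using c1 by (simp add: field_simps)
    have r1: "Re z + t * Im z + t * (Im z + s * (Re z + t * Im z)) = c * Re z - s * Im z"
    proof -
      have "Re z + t * Im z + t * (Im z + s * (Re z + t * Im z)) = Re z + (s*t) * Re z + (t * (1 + (1 + s*t))) * Im z"
        by (simp add: algebra_simps)
      also have "\<dots> = Re z + (c - 1) * Re z + (t * (1 + c)) * Im z" by (simp only: k1) simp
      also have "\<dots> = c * Re z - s * Im z" by (simp only: k2) (simp add: algebra_simps)
      finally show ?thesis .
    qed
    have r2: "Im z + s * (Re z + t * Im z) = s * Re z + c * Im z"
    proof -
      have "Im z + s * (Re z + t * Im z) = s * Re z + (1 + s*t) * Im z" by (simp add: algebra_simps)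
      also have "\<dots> = s * Re z + c * Im z" using k1 by simp
      finally show ?thesis .
    qed
    show ?thesis unfolding u' Sx_def Sy_def
      using r1 r2 by (simp add: complex_eq_iff)
  qed
  have [measurable]: "Sx \<in> borel_measurable borel" "Sy \<in> borel_measurable borel"
    unfolding Sx_def Sy_def by measurable
  have "(\<integral>\<^sup>+z. F (u * z) \<partial>lborel) = (\<integral>\<^sup>+z. (\<lambda>w. F (Sx (Sy w))) (Sx z) \<partial>lborel)"
    by (simp add: eq)
  also have "\<dots> = (\<integral>\<^sup>+z. (\<lambda>w. F (Sx w)) (Sy z) \<partial>lborel)"
    unfolding Sx_def[of] by (subst shear_x) (simp_all add: Sx_def)
  also have "\<dots> = (\<integral>\<^sup>+z. F (Sx z) \<partial>lborel)"
    unfolding Sy_def by (subst shear_y) (simp_all add: Sx_def)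
  also have "\<dots> = (\<integral>\<^sup>+z. F z \<partial>lborel)"
    unfolding Sx_def by (subst shear_x) simp_all
  finally show ?thesis .
qed

lemma rotation_invariant:
  fixes F :: "complex \<Rightarrow> ennreal" assumes [measurable]: "F \<in> borel_measurable borel"
    and u: "norm u = 1"
  shows "(\<integral>\<^sup>+z. F (u * z) \<partial>lborel) = (\<integral>\<^sup>+z. F z \<partial>lborel)"
proof (cases "u = -1")
  case False then show ?thesis using rotation_aux[OF assms] by simp
next
  case True
  have "(\<integral>\<^sup>+z. F (u * z) \<partial>lborel) = (\<integral>\<^sup>+z. (\<lambda>w. F (\<i> * w)) (\<i> * z) \<partial>lborel)"
    using True by simp
  also have "\<dots> = (\<integral>\<^sup>+z. F (\<i> * z) \<partial>lborel)"
    by (rule rotation_aux) (auto simp: complex_eq_iff)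
  also have "\<dots> = (\<integral>\<^sup>+z. F z \<partial>lborel)"
    by (rule rotation_aux) (auto simp: complex_eq_iff)
  finally show ?thesis .
qed



lemma circle_bounds:
  fixes h :: "complex \<Rightarrow> complex"
  assumes hol: "h holomorphic_on UNIV" and z: "z \<noteq> 0"
  defines "E \<equiv> (\<lambda>t::real. exp (2 * of_real pi * \<i> * of_real t))"
  shows "norm (h 0) \<le> integral {0..1} (\<lambda>t. norm (h (z * E t)))"
    and "norm z * norm (deriv h 0) \<le> integral {0..1} (\<lambda>t. norm (h (z * E t)))"
proof -
  define r where "r = norm z"
  define u where "u = z / of_real r"
  have r: "r > 0" using z by (simp add: r_def)
  have zu: "z = u * of_real r" using r by (simp add: u_def r_def)
  have nu: "norm u = 1" using r by (simp add: u_def r_def norm_divide)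
  define g where "g = (\<lambda>w. h (u * w))"
  have holg: "g holomorphic_on UNIV" unfolding g_def
    by (rule holomorphic_on_compose_gen[OF _ hol, unfolded o_def]) (auto intro: holomorphic_intros)
  have contg: "continuous_on UNIV g" using holg holomorphic_on_imp_continuous_on by blast
  have g0: "g 0 = h 0" by (simp add: g_def)
  have dh: "(h has_field_derivative deriv h 0) (at 0)"
    using hol by (meson DERIV_deriv_iff_field_differentiable UNIV_I open_UNIV holomorphic_on_imp_differentiable_at)
  have dmul: "((\<lambda>w. u * w) has_field_derivative u) (at 0)"
    by (rule derivative_eq_intros | simp)+
  have "(g has_field_derivative (deriv h 0 * u)) (at 0)"
    unfolding g_def using DERIV_chain2[where f=h and g="\<lambda>w. u*w" and x=0 and Da="deriv h 0" and Db=u and s=UNIV] dh dmul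
    by simp
  then have dg: "deriv g 0 = u * deriv h 0" by (simp add: DERIV_imp_deriv mult.commute)
  have cp: "circlepath 0 r t = of_real r * E t" for t
    by (simp add: circlepath_def part_circlepath_def linepath_def E_def algebra_simps)
  have vd: "vector_derivative (circlepath 0 r) (at t) = 2 * pi * \<i> * r * E t" for t
    by (simp add: vector_derivative_circlepath E_def)
  have nE: "norm (E t) = 1" for t by (simp add: E_def norm_exp_eq_Re)
  have Enz: "E t \<noteq> 0" for t by (simp add: E_def)
  have gE: "g (of_real r * E t) = h (z * E t)" for t by (simp add: g_def zu algebra_simps)
  have contE: "continuous_on {0..1} (\<lambda>t. norm (h (z * E t)))"
    unfolding E_def
    by (intro continuous_intros continuous_on_compose2[OF holomorphic_on_imp_continuous_on[OF hol]]) auto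
  have intN: "(\<lambda>t. norm (h (z * E t))) integrable_on {0..1}"
    by (rule integrable_continuous_interval[OF contE])
  have aux: "\<And>A B C::complex. norm (A / B * C) = norm A / norm B * norm C" by (simp add: norm_mult norm_divide)
  have ball: "0 \<in> ball (0::complex) r" using r by simp
  have C0: "((\<lambda>w. g w / (w - 0) ^ Suc 0) has_contour_integral ((2 * pi * \<i>) / fact 0 * (deriv ^^ 0) g 0)) (circlepath 0 r)"
    by (rule Cauchy_has_contour_integral_higher_derivative_circlepath[OF continuous_on_subset[OF contg] holomorphic_on_subset[OF holg] ball]) auto
  have C1: "((\<lambda>w. g w / (w - 0) ^ Suc 1) has_contour_integral ((2 * pi * \<i>) / fact 1 * (deriv ^^ 1) g 0)) (circlepath 0 r)"
    by (rule Cauchy_has_contour_integral_higher_derivative_circlepath[OF continuous_on_subset[OF contg] holomorphic_on_subset[OF holg] ball]) auto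
  have I0: "((\<lambda>t. g (of_real r * E t) / (of_real r * E t) * (2 * pi * \<i> * r * E t)) has_integral (2 * pi * \<i> * h 0)) {0..1}"
    using C0 unfolding has_contour_integral cp vd by (simp add: g0)
  have val1: "(2 * pi * \<i>) / fact 1 * (deriv ^^ 1) g 0 = 2 * pi * \<i> * (u * deriv h 0)"
    by (simp add: dg)
  have I1: "((\<lambda>t. g (of_real r * E t) / (of_real r * E t - 0) ^ Suc 1 * (2 * pi * \<i> * r * E t)) has_integral (2 * pi * \<i> * (u * deriv h 0))) {0..1}"
    using C1 unfolding has_contour_integral cp vd val1 .
  have "norm (2 * pi * \<i> * h 0) \<le> integral {0..1} (\<lambda>t. 2 * pi * norm (h (z * E t)))"
  proof -
    have "norm (integral {0..1} (\<lambda>t. g (of_real r * E t) / (of_real r * E t) * (2 * pi * \<i> * r * E t)))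
        \<le> integral {0..1} (\<lambda>t. 2 * pi * norm (h (z * E t)))"
    proof (rule integral_norm_bound_integral)
      show "(\<lambda>t. g (of_real r * E t) / (of_real r * E t) * (2 * pi * \<i> * r * E t)) integrable_on {0..1}"
        using I0 by blast
      show "(\<lambda>t. 2 * pi * norm (h (z * E t))) integrable_on {0..1}"
        using integrable_on_cmult_left[OF intN] by simp
      fix t :: real
      show "norm (g (of_real r * E t) / (of_real r * E t) * (2 * pi * \<i> * r * E t)) \<le> 2 * pi * norm (h (z * E t))"
      proof -
        have n2: "norm (2 * pi * \<i> * r * E t) = 2 * pi * r"
          using r nE by (simp only: norm_mult norm_of_real) simp
        have n1: "norm (of_real r * E t) = r" using r nE by (simp only: norm_mult norm_of_real) (simp)?
        have "norm (g (of_real r * E t) / (of_real r * E t) * (2 * pi * \<i> * r * E t)) = norm (h (z * E t)) / r * (2 * pi * r)"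
          by (simp only: aux n1 n2 gE)
        also have "\<dots> = 2 * pi * norm (h (z * E t))" using r by (simp add: field_simps)
        finally show ?thesis by simp
      qed
    qed
    then show ?thesis by (simp only: integral_unique[OF I0])
  qed
  then show "norm (h 0) \<le> integral {0..1} (\<lambda>t. norm (h (z * E t)))"
    by (simp add: norm_mult)
  have "norm (2 * pi * \<i> * (u * deriv h 0)) \<le> integral {0..1} (\<lambda>t. (2 * pi / r) * norm (h (z * E t)))"
  proof -
    have "norm (integral {0..1} (\<lambda>t. g (of_real r * E t) / (of_real r * E t - 0) ^ Suc 1 * (2 * pi * \<i> * r * E t)))
        \<le> integral {0..1} (\<lambda>t. (2 * pi / r) * norm (h (z * E t)))"
    proof (rule integral_norm_bound_integral)
      show "(\<lambda>t. g (of_real r * E t) / (of_real r * E t - 0) ^ Suc 1 * (2 * pi * \<i> * r * E t)) integrable_on {0..1}"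
        using I1 by blast
      show "(\<lambda>t. (2 * pi / r) * norm (h (z * E t))) integrable_on {0..1}"
        using integrable_on_cmult_left[OF intN, of "2 * pi / r"] by simp
      fix t :: real
      have n1: "norm ((of_real r * E t - 0) ^ Suc 1) = r * r"
        using r nE by (simp only: diff_zero norm_power norm_mult norm_of_real) simp
      have n2: "norm (2 * pi * \<i> * r * E t) = 2 * pi * r"
        using r nE by (simp only: norm_mult norm_of_real) simp
      have "norm (g (of_real r * E t) / (of_real r * E t - 0) ^ Suc 1 * (2 * pi * \<i> * r * E t))
          = norm (h (z * E t)) / (r * r) * (2 * pi * r)"
        by (simp only: aux n1 n2 gE)
      also have "\<dots> = (2 * pi / r) * norm (h (z * E t))" using r by (simp add: field_simps)
      finally show "norm (g (of_real r * E t) / (of_real r * E t - 0) ^ Suc 1 * (2 * pi * \<i> * r * E t)) \<le> (2 * pi / r) * norm (h (z * E t))"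
        by simp
    qed
    then show ?thesis by (simp only: integral_unique[OF I1])
  qed
  then have "2 * pi * norm (deriv h 0) \<le> (2 * pi / r) * integral {0..1} (\<lambda>t. norm (h (z * E t)))"
    by (simp add: norm_mult nu)
  then show "norm z * norm (deriv h 0) \<le> integral {0..1} (\<lambda>t. norm (h (z * E t)))"
    using r by (simp add: r_def field_simps)
qed



lemma powr_tangent:
  fixes p a y :: real assumes p: "p \<ge> 1" and a: "a > 0" and y: "y \<ge> 0"
  shows "a powr p + p * a powr (p - 1) * (y - a) \<le> y powr p"
proof (cases "y = 0")
  case True
  have "a powr p + p * a powr (p - 1) * (0 - a) = (1 - p) * a powr p"
    using a by (simp add: algebra_simps powr_diff)
  also have "\<dots> \<le> 0" using p by (simp add: mult_nonpos_nonneg)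
  finally show ?thesis using True by simp
next
  case False
  then have y': "y \<in> {0<..}" using y by simp
  have d: "((\<lambda>x. x powr p) has_real_derivative p * a powr (p - 1)) (at a within {0<..})"
    using a by (auto intro!: derivative_eq_intros)
  have "p * a powr (p - 1) * (y - a) \<le> y powr p - a powr p"
    by (rule convex_on_imp_above_tangent[OF powr_convex[OF p] _ _ y' d]) (use a in \<open>auto simp: interior_open\<close>)
  then show ?thesis by simp
qed

lemma jensen_powr01:
  fixes \<phi> :: "real \<Rightarrow> real"
  assumes cont: "continuous_on {0..1} \<phi>" and nn: "\<And>t. t \<in> {0..1} \<Longrightarrow> 0 \<le> \<phi> t" and p: "p \<ge> 1"
  shows "(integral {0..1} \<phi>) powr p \<le> integral {0..1} (\<lambda>t. \<phi> t powr p)"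
proof -
  have int1: "\<phi> integrable_on {0..1}" by (rule integrable_continuous_interval[OF cont])
  have contp: "continuous_on {0..1} (\<lambda>t. \<phi> t powr p)"
    using p nn by (intro continuous_on_powr' cont continuous_on_const) auto
  have int2: "(\<lambda>t. \<phi> t powr p) integrable_on {0..1}" by (rule integrable_continuous_interval[OF contp])
  define a where "a = integral {0..1} \<phi>"
  have a0: "a \<ge> 0" unfolding a_def using nn by (intro integral_nonneg int1) auto
  show ?thesis
  proof (cases "a = 0")
    case True
    then show ?thesis unfolding a_def[symmetric] using nn by (auto intro!: integral_nonneg int2)
  next
    case False
    with a0 have a: "a > 0" by simp
    define D where "D = p * a powr (p - 1)"
    have int3: "(\<lambda>t. a powr p + D * (\<phi> t - a)) integrable_on {0..1}"
      by (rule integrable_continuous_interval) (intro continuous_intros cont)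
    have "integral {0..1} (\<lambda>t. a powr p + D * (\<phi> t - a)) \<le> integral {0..1} (\<lambda>t. \<phi> t powr p)"
      by (rule integral_le[OF int3 int2]) (use nn powr_tangent[OF p a] in \<open>auto simp: D_def\<close>)
    moreover have "integral {0..1} (\<lambda>t. a powr p + D * (\<phi> t - a)) = a powr p"
    proof -
      have h1: "(\<phi> has_integral a) {0..1}" unfolding a_def using int1 by (rule integrable_integral)
      have hc: "\<And>c. ((\<lambda>t. c) has_integral c) {0..1::real}"
        using has_integral_const_real[of _ 0 "1::real"] by simp
      have "((\<lambda>t. a powr p + D * (\<phi> t - a)) has_integral (a powr p + D * (a - a))) {0..1}"
        by (intro has_integral_add hc has_integral_mult_right has_integral_diff h1)
      then show ?thesis by (simp add: integral_unique)
    qed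
    ultimately show ?thesis unfolding a_def by simp
  qed
qed



lemma holo_measurable:
  assumes "h holomorphic_on UNIV"
  shows "h \<in> borel_measurable borel"
  using assms by (intro borel_measurable_continuous_onI holomorphic_on_imp_continuous_on)

lemma area_bound:
  fixes h :: "complex \<Rightarrow> complex" and p v :: real
  assumes hol: "h holomorphic_on UNIV" and p: "p > 0"
  defines "Ann \<equiv> {z::complex. 1 \<le> norm z \<and> norm z \<le> 2}"
  defines "E \<equiv> (\<lambda>t::real. exp (2 * of_real pi * \<i> * of_real t))"
  assumes bnd: "\<And>z. z \<in> Ann \<Longrightarrow> v \<le> integral {0..1} (\<lambda>t. norm (h (z * E t)) powr p)"
  shows "ennreal v * emeasure lborel Ann \<le> (\<integral>\<^sup>+z. indicator Ann z * ennreal (norm (h z) powr p) \<partial>lborel)"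
proof -
  have [measurable]: "h \<in> borel_measurable borel" by (rule holo_measurable[OF hol])
  have [measurable]: "Ann \<in> sets borel" unfolding Ann_def by measurable
  have [measurable]: "E \<in> borel_measurable borel" unfolding E_def by measurable
  have nE: "norm (E t) = 1" for t by (simp add: E_def norm_exp_eq_Re)
  have Q: "pair_sigma_finite (lborel::complex measure) (lborel::real measure)"
    by (simp add: pair_sigma_finite_def lborel.sigma_finite_measure_axioms)
  have contE0: "continuous_on {0..1} (\<lambda>t. norm (h (z * E t)))" for z
    unfolding E_def
    by (intro continuous_intros continuous_on_compose2[OF holomorphic_on_imp_continuous_on[OF hol]]) auto
  have contE: "continuous_on {0..1} (\<lambda>t. norm (h (z * E t)) powr p)" for z
    using p by (intro continuous_on_powr' contE0 continuous_on_const) auto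
  have Bz: "(\<integral>\<^sup>+t. ennreal (indicator {0..1} t * norm (h (z * E t)) powr p) \<partial>lborel)
            = ennreal (integral {0..1} (\<lambda>t. norm (h (z * E t)) powr p))" for z
    by (rule nn_integral_has_integral_lebesgue) (auto intro!: integrable_integral integrable_continuous_interval contE)
  have eqt: "(\<integral>\<^sup>+z. indicator Ann z * ennreal (indicator {0..1} t * norm (h (z * E t)) powr p) \<partial>lborel)
        = indicator {0..1} t * (\<integral>\<^sup>+z. indicator Ann z * ennreal (norm (h z) powr p) \<partial>lborel)" for t
  proof -
    have ind: "indicator Ann (E t * z) = (indicator Ann z :: ennreal)" for z
      unfolding Ann_def by (simp add: norm_mult nE indicator_def)
    have memA: "z * E t \<in> Ann \<longleftrightarrow> z \<in> Ann" for z
      unfolding Ann_def by (simp add: norm_mult nE)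
    have "(\<integral>\<^sup>+z. indicator Ann z * ennreal (indicator {0..1} t * norm (h (z * E t)) powr p) \<partial>lborel)
        = indicator {0..1} t * (\<integral>\<^sup>+z. (\<lambda>w. indicator Ann w * ennreal (norm (h w) powr p)) (E t * z) \<partial>lborel)"
      by (subst nn_integral_cmult[symmetric]) (auto simp: ind memA mult.commute indicator_def intro!: nn_integral_cong)
    also have "\<dots> = indicator {0..1} t * (\<integral>\<^sup>+z. indicator Ann z * ennreal (norm (h z) powr p) \<partial>lborel)"
      by (subst rotation_invariant) (simp_all add: nE)
    finally show ?thesis .
  qed
  have "ennreal v * emeasure lborel Ann = (\<integral>\<^sup>+z. ennreal v * indicator Ann z \<partial>lborel)"
    by (simp add: nn_integral_cmult_indicator)
  also have "\<dots> \<le> (\<integral>\<^sup>+z. \<integral>\<^sup>+t. indicator Ann z * ennreal (indicator {0..1} t * norm (h (z * E t)) powr p) \<partial>lborel \<partial>lborel)"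
  proof (rule nn_integral_mono)
    fix z :: complex
    show "ennreal v * indicator Ann z \<le> (\<integral>\<^sup>+t. indicator Ann z * ennreal (indicator {0..1} t * norm (h (z * E t)) powr p) \<partial>lborel)"
    proof (cases "z \<in> Ann")
      case True
      then show ?thesis using bnd[OF True] Bz[of z] by (simp add: ennreal_leI)
    qed simp
  qed
  also have "\<dots> = (\<integral>\<^sup>+t. \<integral>\<^sup>+z. indicator Ann z * ennreal (indicator {0..1} t * norm (h (z * E t)) powr p) \<partial>lborel \<partial>lborel)"
    by (rule pair_sigma_finite.Fubini'[OF Q, symmetric]) measurable
  also have "\<dots> = (\<integral>\<^sup>+(t::real). indicator {0..1} t * (\<integral>\<^sup>+z. indicator Ann z * ennreal (norm (h z) powr p) \<partial>lborel) \<partial>lborel)"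
    by (simp only: eqt)
  also have "\<dots> = (\<integral>\<^sup>+z. indicator Ann z * ennreal (norm (h z) powr p) \<partial>lborel)"
    by (subst nn_integral_multc) simp_all
  finally show ?thesis .
qed



lemma powr_root_bound:
  fixes a b C p :: real
  assumes "0 \<le> a" "0 \<le> b" "0 \<le> C" "0 < p" "a powr p \<le> C * b"
  shows "a \<le> C powr (1/p) * b powr (1/p)"
proof -
  have "a = (a powr p) powr (1/p)" using assms by (simp add: powr_powr)
  also have "\<dots> \<le> (C * b) powr (1/p)" using assms by (intro powr_mono2) auto
  also have "\<dots> = C powr (1/p) * b powr (1/p)" using assms by (simp add: powr_mult)
  finally show ?thesis .
qed

lemma point_bounds:
  fixes p \<alpha> m :: real
  assumes p: "1 \<le> p" and \<alpha>: "0 < \<alpha>" and m: "0 < m"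
  shows "\<exists>K>0. \<forall>h \<in> fock_space p \<alpha> m. norm (h 0) \<le> K * fock_norm p \<alpha> m h \<and> norm (deriv h 0) \<le> K * fock_norm p \<alpha> m h"
proof -
  define Ann where "Ann = {z::complex. 1 \<le> norm z \<and> norm z \<le> 2}"
  define E where "E = (\<lambda>t::real. exp (2 * of_real pi * \<i> * of_real t))"
  define w where "w = (\<lambda>z::complex. exp (- p * \<alpha> * norm z powr m))"
  define Ew where "Ew = exp (p * \<alpha> * 2 powr m)"
  have AnnB[measurable]: "Ann \<in> sets borel" unfolding Ann_def by measurable
  have "Ann \<subseteq> cball 0 2" unfolding Ann_def by auto
  then have "emeasure lborel Ann \<le> emeasure lborel (cball (0::complex) 2)"
    by (intro emeasure_mono) auto
  then have finA: "emeasure lborel Ann < \<infinity>"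
    using emeasure_lborel_cball_finite[of "0::complex" 2] by (rule le_less_trans)
  have "ball (3/2) (1/2) \<subseteq> Ann"
  proof
    fix z :: complex assume "z \<in> ball (3/2) (1/2)"
    then have d: "norm (z - 3/2) < 1/2" by (simp add: dist_norm norm_minus_commute)
    have "norm (3/2::complex) - norm z \<le> norm (3/2 - z)" by (rule norm_triangle_ineq2)
    moreover have "norm z - norm (3/2::complex) \<le> norm (z - 3/2)" by (rule norm_triangle_ineq2)
    moreover have "norm (3/2 - z) = norm (z - 3/2)" by (rule norm_minus_commute)
    moreover have "norm (3/2::complex) = 3/2" by simp
    ultimately have "1 \<le> norm z" "norm z \<le> 2" using d by linarith+
    then show "z \<in> Ann" unfolding Ann_def by simp
  qed
  then have "emeasure lborel (ball (3/2::complex) (1/2)) \<le> emeasure lborel Ann"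
    by (intro emeasure_mono) auto
  moreover have "emeasure lborel (ball (3/2::complex) (1/2)) > 0"
    by (simp add: emeasure_ball unit_ball_vol_pos)
  ultimately have posA: "emeasure lborel Ann > 0" by auto
  define \<mu> where "\<mu> = measure lborel Ann"
  have eA: "emeasure lborel Ann = ennreal \<mu>" unfolding \<mu>_def using finA by (simp add: emeasure_eq_ennreal_measure)
  have \<mu>: "\<mu> > 0" using posA unfolding eA by simp
  have Ew: "Ew > 0" by (simp add: Ew_def)
  define C where "C = Ew / \<mu>"
  have C: "C > 0" using Ew \<mu> by (simp add: C_def)
  define K where "K = C powr (1/p)"
  have K: "K > 0" using C by (simp add: K_def)
  have main: "norm (h 0) \<le> K * fock_norm p \<alpha> m h \<and> norm (deriv h 0) \<le> K * fock_norm p \<alpha> m h"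
    if hX: "h \<in> fock_space p \<alpha> m" for h
  proof -
    have hol: "h holomorphic_on UNIV" and intg: "integrable lborel (\<lambda>z. norm (h z) powr p * w z)"
      using hX by (auto simp: fock_space_def w_def)
    have [measurable]: "h \<in> borel_measurable borel" by (rule holo_measurable[OF hol])
    define I where "I = integral\<^sup>L lborel (\<lambda>z. norm (h z) powr p * w z)"
    have I0: "I \<ge> 0" unfolding I_def w_def by (intro integral_nonneg_AE) auto
    have fn: "fock_norm p \<alpha> m h = I powr (1/p)" by (simp add: fock_norm_def I_def w_def)
    have claim: "v \<le> C * I" if v0: "0 \<le> v" and bnd: "\<And>z. z \<in> Ann \<Longrightarrow> v \<le> integral {0..1} (\<lambda>t. norm (h (z * E t)) powr p)" for v
    proof -
      have "ennreal v * ennreal \<mu> \<le> (\<integral>\<^sup>+z. indicator Ann z * ennreal (norm (h z) powr p) \<partial>lborel)"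
        unfolding eA[symmetric] by (rule area_bound[OF hol, of p v, folded Ann_def E_def]) (use bnd p in \<open>auto simp: E_def\<close>)
      also have "\<dots> \<le> (\<integral>\<^sup>+z. ennreal Ew * ennreal (norm (h z) powr p * w z) \<partial>lborel)"
      proof (rule nn_integral_mono)
        fix z :: complex
        show "indicator Ann z * ennreal (norm (h z) powr p) \<le> ennreal Ew * ennreal (norm (h z) powr p * w z)"
        proof (cases "z \<in> Ann")
          case True
          then have "norm z powr m \<le> 2 powr m" unfolding Ann_def using m by (intro powr_mono2) auto
          then have "1 \<le> Ew * w z" unfolding Ew_def w_def using p \<alpha>
            by (simp add: exp_add[symmetric] mult_left_mono)
          then have "norm (h z) powr p * 1 \<le> norm (h z) powr p * (Ew * w z)"
            by (intro mult_left_mono) auto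
          then have "norm (h z) powr p \<le> Ew * (norm (h z) powr p * w z)"
            by (simp add: algebra_simps)
          then show ?thesis using True Ew by (simp add: ennreal_mult[symmetric] ennreal_leI w_def)
        qed simp
      qed
      also have "\<dots> = ennreal Ew * (\<integral>\<^sup>+z. ennreal (norm (h z) powr p * w z) \<partial>lborel)"
        by (rule nn_integral_cmult) (simp add: w_def)
      also have "(\<integral>\<^sup>+z. ennreal (norm (h z) powr p * w z) \<partial>lborel) = ennreal I"
        unfolding I_def by (rule nn_integral_eq_integral[OF intg]) (simp add: w_def)
      finally have "ennreal (v * \<mu>) \<le> ennreal (Ew * I)"
        using v0 \<mu> Ew I0 by (simp add: ennreal_mult[symmetric])
      then have "v * \<mu> \<le> Ew * I" using Ew I0 by (simp add: ennreal_le_iff)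
      then show ?thesis using \<mu> by (simp add: C_def field_simps)
    qed
    have cb: "norm (h 0) \<le> integral {0..1} (\<lambda>t. norm (h (z * E t)))"
             "norm z * norm (deriv h 0) \<le> integral {0..1} (\<lambda>t. norm (h (z * E t)))"
      if "z \<noteq> 0" for z
      using circle_bounds[OF hol that] unfolding E_def by auto
    have contE0: "continuous_on {0..1} (\<lambda>t. norm (h (z * E t)))" for z
      unfolding E_def
      by (intro continuous_intros continuous_on_compose2[OF holomorphic_on_imp_continuous_on[OF hol]]) auto
    have jen: "(integral {0..1} (\<lambda>t. norm (h (z * E t)))) powr p \<le> integral {0..1} (\<lambda>t. norm (h (z * E t)) powr p)" for z
      by (rule jensen_powr01[OF contE0 _ p]) simp
    have v1: "norm (h 0) powr p \<le> C * I"
    proof (rule claim)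
      fix z assume z: "z \<in> Ann"
      then have "z \<noteq> 0" unfolding Ann_def by auto
      then have "norm (h 0) powr p \<le> (integral {0..1} (\<lambda>t. norm (h (z * E t)))) powr p"
        using cb p by (intro powr_mono2) auto
      also have "\<dots> \<le> integral {0..1} (\<lambda>t. norm (h (z * E t)) powr p)" by (rule jen)
      finally show "norm (h 0) powr p \<le> integral {0..1} (\<lambda>t. norm (h (z * E t)) powr p)" .
    qed simp
    have v2: "norm (deriv h 0) powr p \<le> C * I"
    proof (rule claim)
      fix z assume z: "z \<in> Ann"
      then have z1: "1 \<le> norm z" and "z \<noteq> 0" unfolding Ann_def by auto
      have "norm (deriv h 0) \<le> norm z * norm (deriv h 0)"
        using z1 by (simp add: mult_le_cancel_right1)
      also have "\<dots> \<le> integral {0..1} (\<lambda>t. norm (h (z * E t)))" using cb(2)[OF \<open>z \<noteq> 0\<close>] .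
      finally have "norm (deriv h 0) powr p \<le> (integral {0..1} (\<lambda>t. norm (h (z * E t)))) powr p"
        using p by (intro powr_mono2) auto
      also have "\<dots> \<le> integral {0..1} (\<lambda>t. norm (h (z * E t)) powr p)" by (rule jen)
      finally show "norm (deriv h 0) powr p \<le> integral {0..1} (\<lambda>t. norm (h (z * E t)) powr p)" .
    qed simp
    have pp: "0 < p" using p by simp
    have "norm (h 0) \<le> C powr (1/p) * I powr (1/p)"
      by (rule powr_root_bound[OF norm_ge_zero I0 _ pp v1]) (use C in simp)
    moreover have "norm (deriv h 0) \<le> C powr (1/p) * I powr (1/p)"
      by (rule powr_root_bound[OF norm_ge_zero I0 _ pp v2]) (use C in simp)
    ultimately show ?thesis unfolding fn K_def by simp
  qed
  show ?thesis using K main by blast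
qed



lemma powr_sum_le:
  fixes x y p :: real assumes "0 \<le> x" "0 \<le> y" "0 < p"
  shows "(x + y) powr p \<le> 2 powr p * (x powr p + y powr p)"
proof -
  have "(x + y) powr p \<le> (2 * max x y) powr p" using assms by (intro powr_mono2) auto
  also have "\<dots> = 2 powr p * max x y powr p" using assms by (simp add: powr_mult)
  also have "max x y powr p \<le> x powr p + y powr p" by (simp add: max_def)
  then have "2 powr p * max x y powr p \<le> 2 powr p * (x powr p + y powr p)" by (simp add: mult_left_mono)
  finally show ?thesis .
qed

lemma fock_comb:
  fixes p \<alpha> m :: real
  assumes p: "0 < p" and f: "f \<in> fock_space p \<alpha> m" and g: "g \<in> fock_space p \<alpha> m"
  shows "(\<lambda>z. c * f z - g z) \<in> fock_space p \<alpha> m"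
proof -
  define w where "w = (\<lambda>z::complex. exp (- p * \<alpha> * norm z powr m))"
  have hf: "f holomorphic_on UNIV" and hg: "g holomorphic_on UNIV"
    and intf: "integrable lborel (\<lambda>z. norm (f z) powr p * w z)"
    and intg: "integrable lborel (\<lambda>z. norm (g z) powr p * w z)"
    using f g by (auto simp: fock_space_def w_def)
  have [measurable]: "f \<in> borel_measurable borel" "g \<in> borel_measurable borel"
    using hf hg by (auto intro!: borel_measurable_continuous_onI holomorphic_on_imp_continuous_on)
  have int2: "integrable lborel (\<lambda>z. 2 powr p * norm c powr p * (norm (f z) powr p * w z) + 2 powr p * (norm (g z) powr p * w z))"
    by (intro Bochner_Integration.integrable_add Bochner_Integration.integrable_mult_right intf intg)
  have "integrable lborel (\<lambda>z. norm (c * f z - g z) powr p * w z)"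
  proof (rule Bochner_Integration.integrable_bound[OF int2])
    show "(\<lambda>z. norm (c * f z - g z) powr p * w z) \<in> borel_measurable lborel" unfolding w_def by measurable
    show "AE z in lborel. norm (norm (c * f z - g z) powr p * w z) \<le> norm (2 powr p * norm c powr p * (norm (f z) powr p * w z) + 2 powr p * (norm (g z) powr p * w z))"
    proof (rule AE_I2)
      fix z
      have w0: "0 < w z" by (simp add: w_def)
      have "norm (c * f z - g z) powr p \<le> (norm (c * f z) + norm (g z)) powr p"
        using p by (intro powr_mono2 norm_triangle_ineq4) auto
      also have "\<dots> \<le> 2 powr p * (norm (c * f z) powr p + norm (g z) powr p)"
        using p by (intro powr_sum_le) auto
      also have "\<dots> = 2 powr p * norm c powr p * norm (f z) powr p + 2 powr p * norm (g z) powr p"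
        by (simp add: norm_mult powr_mult algebra_simps)
      finally have "norm (c * f z - g z) powr p * w z \<le> (2 powr p * norm c powr p * norm (f z) powr p + 2 powr p * norm (g z) powr p) * w z"
        using w0 by (simp add: mult_right_mono)
      then show "norm (norm (c * f z - g z) powr p * w z) \<le> norm (2 powr p * norm c powr p * (norm (f z) powr p * w z) + 2 powr p * (norm (g z) powr p * w z))"
        using w0 by (simp add: algebra_simps)
    qed
  qed
  moreover have "(\<lambda>z. c * f z - g z) holomorphic_on UNIV"
    using hf hg by (intro holomorphic_intros)
  ultimately show ?thesis by (simp add: fock_space_def w_def)
qed



lemma bounded_by_limit:
  fixes f :: "real \<Rightarrow> real"
  assumes cont: "continuous_on {0..} f" and lim: "(f \<longlongrightarrow> 0) at_top"
  shows "\<exists>C. \<forall>r\<ge>0. f r \<le> C"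
proof -
  from lim have "eventually (\<lambda>r. f r < 1) at_top"
    by (rule order_tendstoD) simp
  then obtain R where R: "\<And>r. r \<ge> R \<Longrightarrow> f r < 1" by (auto simp: eventually_at_top_linorder)
  have "compact (f ` {0..max 0 R})"
    by (rule compact_continuous_image[OF continuous_on_subset[OF cont]]) auto
  then obtain B where B: "\<And>y. y \<in> f ` {0..max 0 R} \<Longrightarrow> y \<le> B"
    using compact_imp_bounded bounded_real by (metis abs_le_D1)
  show ?thesis
  proof (intro exI allI impI)
    fix r :: real assume "r \<ge> 0"
    show "f r \<le> max B 1"
    proof (cases "r \<le> max 0 R")
      case True then show ?thesis using B[of "f r"] \<open>r \<ge> 0\<close> by auto
    next
      case False
      then have "R \<le> r" by simp
      then have "f r < 1" by (rule R)
      then show ?thesis by simp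
    qed
  qed
qed

lemma integrable_inv_sq: "integrable lborel (\<lambda>x::real. inverse (1 + x^2))"
proof -
  have "einterval (-\<infinity>) \<infinity> = (UNIV :: real set)" by (auto simp: einterval_def)
  then show ?thesis using integrable_inverse_1_plus_square by (simp add: set_integrable_def)
qed

lemma lin_in_fock:
  fixes p \<alpha> m :: real and a b :: complex
  assumes p: "1 \<le> p" and \<alpha>: "0 < \<alpha>" and m: "0 < m"
  shows "(\<lambda>z. a + b * z) \<in> fock_space p \<alpha> m"
proof -
  define f where "f = (\<lambda>r::real. (1+r^2)^2 * (1+r) powr p * exp(-p*\<alpha>* r powr m))"
  have "continuous_on {0..} f" unfolding f_def
    by (intro continuous_intros continuous_on_powr') (auto simp: m)
  moreover have "(f \<longlongrightarrow> 0) at_top" unfolding f_def using p \<alpha> m by real_asymp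
  ultimately obtain C where C: "\<And>r. r \<ge> 0 \<Longrightarrow> f r \<le> C" using bounded_by_limit by blast
  define A where "A = (norm a + norm b) powr p"
  define g where "g = (\<lambda>x::real. inverse (1 + x^2))"
  define F where "F = (\<lambda>z::complex. norm (a + b * z) powr p * exp (- p * \<alpha> * norm z powr m))"
  have Fmeas[measurable]: "F \<in> borel_measurable borel" unfolding F_def by measurable
  have bound: "F z \<le> A * C * (g (Re z) * g (Im z))" for z
  proof -
    have n1: "norm (a + b * z) \<le> (norm a + norm b) * (1 + norm z)"
    proof -
      have "norm (a + b*z) \<le> norm a + norm b * norm z" using norm_triangle_ineq[of a "b*z"] by (simp add: norm_mult)
      moreover have "(norm a + norm b) * (1 + norm z) = norm a + norm b * norm z + (norm a * norm z + norm b)"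
        by (simp add: algebra_simps)
      moreover have "0 \<le> norm a * norm z + norm b" by simp
      ultimately show ?thesis by linarith
    qed
    have "norm (a + b * z) powr p \<le> ((norm a + norm b) * (1 + norm z)) powr p"
      using n1 p by (intro powr_mono2) auto
    also have "\<dots> = A * (1 + norm z) powr p" unfolding A_def by (simp add: powr_mult)
    finally have e1: "norm (a + b * z) powr p \<le> A * (1 + norm z) powr p" .
    have gg: "(1 + (Re z)^2) * (1 + (Im z)^2) \<le> (1 + (norm z)^2)^2"
    proof -
      have "\<bar>Re z\<bar>^2 \<le> (norm z)^2" by (rule power_mono[OF abs_Re_le_cmod]) simp
      moreover have "\<bar>Im z\<bar>^2 \<le> (norm z)^2" by (rule power_mono[OF abs_Im_le_cmod]) simp
      ultimately have "(Re z)^2 \<le> (norm z)^2" "(Im z)^2 \<le> (norm z)^2" by simp_all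
      then show ?thesis unfolding power2_eq_square
        by (intro mult_mono) auto
    qed
    have gpos: "(1 + (Re z)^2) * (1 + (Im z)^2) > 0" by (simp add: add_pos_nonneg)
    have nz: "1 + (norm z)^2 > 0" using add_pos_nonneg[OF zero_less_one zero_le_power2[of "norm z"]] .
    have "F z \<le> A * ((1 + norm z) powr p * exp (- p * \<alpha> * norm z powr m))"
      unfolding F_def using e1 by (simp add: mult.assoc mult_right_mono)
    also have "(1 + norm z) powr p * exp (- p * \<alpha> * norm z powr m) = f (norm z) / (1 + (norm z)^2)^2"
      unfolding f_def using add_pos_nonneg[OF zero_less_one zero_le_power2[of "norm z"]] by (simp add: field_simps)
    also have "\<dots> \<le> C / (1 + (norm z)^2)^2"
      using C[of "norm z"] by (simp add: divide_right_mono)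
    also have "\<dots> \<le> C / ((1 + (Re z)^2) * (1 + (Im z)^2))"
    proof -
      have "C \<ge> 0" using C[of 0] unfolding f_def by simp
      moreover have "0 < (1 + (norm z)^2)^2 * ((1 + (Re z)^2) * (1 + (Im z)^2))"
        by (rule mult_pos_pos[OF zero_less_power[OF nz] gpos])
      ultimately show ?thesis using gg by (intro divide_left_mono) auto
    qed
    also have "\<dots> = C * (g (Re z) * g (Im z))" unfolding g_def by (simp add: field_simps)
    finally show ?thesis
      unfolding A_def using mult_left_mono by (simp add: mult.assoc mult_left_mono)
  qed
  have gmeas[measurable]: "g \<in> borel_measurable borel" unfolding g_def by measurable
  have gnn: "0 \<le> g x" for x unfolding g_def by simp
  have gfin: "(\<integral>\<^sup>+x. ennreal (g x) \<partial>lborel) < \<infinity>"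
    using nn_integral_eq_integral[OF integrable_inv_sq] by (simp add: g_def)
  have prod: "(\<integral>\<^sup>+z. ennreal (g (Re z) * g (Im z)) \<partial>lborel) = (\<integral>\<^sup>+x. ennreal (g x) \<partial>lborel) * (\<integral>\<^sup>+x. ennreal (g x) \<partial>lborel)"
  proof -
    have "(\<integral>\<^sup>+z. ennreal (g (Re z) * g (Im z)) \<partial>lborel) = (\<integral>\<^sup>+(z::complex). (\<Prod>b\<in>Basis. ennreal (g (z \<bullet> b))) \<partial>lborel)"
    proof -
      have "(\<lambda>z. ennreal (g (Re z) * g (Im z))) = (\<lambda>z. (\<Prod>b\<in>(Basis::complex set). ennreal (g (z \<bullet> b))))"
      proof (rule ext)
        fix z :: complex
        have "(\<Prod>b\<in>(Basis::complex set). ennreal (g (z \<bullet> b))) = ennreal (g (z \<bullet> 1)) * ennreal (g (z \<bullet> \<i>))"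
          unfolding Basis_complex_def by (simp add: complex_eq_iff)
        then show "ennreal (g (Re z) * g (Im z)) = (\<Prod>b\<in>Basis. ennreal (g (z \<bullet> b)))"
          by (simp add: inner_complex_def ennreal_mult' gnn)
      qed
      then show ?thesis by simp
    qed
    also have "\<dots> = (\<Prod>b\<in>(Basis::complex set). (\<integral>\<^sup>+x. ennreal (g x) \<partial>lborel))"
      by (rule nn_integral_lborel_prod) auto
    also have "\<dots> = (\<integral>\<^sup>+x. ennreal (g x) \<partial>lborel) * (\<integral>\<^sup>+x. ennreal (g x) \<partial>lborel)"
      by (simp add: Basis_complex_def)
    finally show ?thesis .
  qed
  have "integrable lborel F"
  proof (rule integrableI_bounded)
    show "F \<in> borel_measurable lborel" by simp
    have "(\<integral>\<^sup>+z. ennreal (norm (F z)) \<partial>lborel) \<le> (\<integral>\<^sup>+z. ennreal (A * C) * ennreal (g (Re z) * g (Im z)) \<partial>lborel)"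
    proof (rule nn_integral_mono)
      fix z
      have "0 \<le> F z" unfolding F_def by simp
      moreover have "0 \<le> A * C" using C[of 0] unfolding f_def A_def by simp
      ultimately show "ennreal (norm (F z)) \<le> ennreal (A * C) * ennreal (g (Re z) * g (Im z))"
        using bound[of z] gnn by (simp add: ennreal_mult'[symmetric] ennreal_leI)
    qed
    also have "\<dots> = ennreal (A * C) * ((\<integral>\<^sup>+x. ennreal (g x) \<partial>lborel) * (\<integral>\<^sup>+x. ennreal (g x) \<partial>lborel))"
      by (subst nn_integral_cmult) (auto simp: prod)
    also have "\<dots> < \<infinity>" using gfin by (simp add: ennreal_mult_less_top)
    finally show "(\<integral>\<^sup>+z. ennreal (norm (F z)) \<partial>lborel) < \<infinity>" .
  qed
  then show ?thesis unfolding fock_space_def F_def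
    by (auto intro!: holomorphic_intros)
qed



lemma hardy_deriv:
  fixes f :: "complex \<Rightarrow> complex"
  assumes hol: "f holomorphic_on UNIV"
  shows "(hardy f has_field_derivative deriv f 0 / 2) (at 0)"
proof -
  define L where "L = deriv f 0"
  have df: "(f has_field_derivative L) (at 0)"
    unfolding L_def using hol by (meson DERIV_deriv_iff_field_differentiable UNIV_I open_UNIV holomorphic_on_imp_differentiable_at)
  have lim: "((\<lambda>w. (f w - f 0) / w) \<longlongrightarrow> L) (at 0)"
    using df unfolding has_field_derivative_iff by simp
  have contf: "continuous_on UNIV f" using hol holomorphic_on_imp_continuous_on by blast
  have "((\<lambda>z. (hardy f z - hardy f 0) / (z - 0)) \<longlongrightarrow> L / 2) (at 0)"
    unfolding tendsto_iff
  proof (intro allI impI)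
    fix e :: real assume e: "e > 0"
    have "eventually (\<lambda>w. dist ((f w - f 0) / w) L < e/2) (at 0)"
    proof -
      have "e/2 > 0" using e by simp
      then show ?thesis using lim unfolding tendsto_iff by blast
    qed
    then obtain d where d: "d > 0" and dP: "\<And>w. w \<noteq> 0 \<Longrightarrow> dist w 0 < d \<Longrightarrow> dist ((f w - f 0) / w) L < e/2"
      unfolding eventually_at by auto
    define R where "R = (\<lambda>w. f w - f 0 - L * w)"
    have Rb: "norm (R w) \<le> e/2 * norm w" if "norm w < d" for w
    proof (cases "w = 0")
      case True then show ?thesis by (simp add: R_def)
    next
      case False
      have "norm ((f w - f 0) / w - L) < e/2" using dP[OF False] that by (simp add: dist_norm)
      moreover have "R w = ((f w - f 0) / w - L) * w" using False by (simp add: R_def field_simps)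
      ultimately have eq: "norm (R w) = norm ((f w - f 0) / w - L) * norm w"
        and le: "norm ((f w - f 0) / w - L) \<le> e/2" by (simp_all add: norm_mult)
      have "norm ((f w - f 0) / w - L) * norm w \<le> e/2 * norm w"
        by (rule mult_right_mono[OF le norm_ge_zero])
      then show ?thesis using eq by simp
    qed
    have key: "dist ((hardy f z - hardy f 0) / (z - 0)) (L / 2) < e" if z: "z \<noteq> 0 \<and> dist z 0 < d" for z
    proof -
      have z0: "z \<noteq> 0" and zd: "norm z < d" using z by auto
      have ci: "f contour_integrable_on linepath 0 z"
        by (rule contour_integrable_continuous_linepath) (rule continuous_on_subset[OF contf], auto)
      have h1: "(f has_contour_integral contour_integral (linepath 0 z) f) (linepath 0 z)"
        by (rule has_contour_integral_integral[OF ci])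
      have h2: "((\<lambda>w. f 0 + L * w) has_contour_integral ((f 0 * z + L * z^2 / 2) - (f 0 * 0 + L * 0^2 / 2))) (linepath 0 z)"
      proof -
        have "((\<lambda>w. f 0 + L * w) has_contour_integral ((\<lambda>w. f 0 * w + L * w^2 / 2) (pathfinish (linepath 0 z)) - (\<lambda>w. f 0 * w + L * w^2 / 2) (pathstart (linepath 0 z)))) (linepath 0 z)"
          by (rule contour_integral_primitive[where S=UNIV, OF _ valid_path_linepath]) (auto intro!: derivative_eq_intros simp: power2_eq_square)
        then show ?thesis by simp
      qed
      define J where "J = contour_integral (linepath 0 z) f - (f 0 * z + L * z^2 / 2)"
      have h3: "(R has_contour_integral J) (linepath 0 z)"
        using has_contour_integral_diff[OF h1 h2] unfolding R_def J_def by (simp add: algebra_simps)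
      have bnd: "norm J \<le> (e/2 * norm z) * norm (z - 0)"
      proof (rule has_contour_integral_bound_linepath[OF h3])
        show "0 \<le> e/2 * norm z" using e by simp
        fix w assume w: "w \<in> closed_segment 0 z"
        then have wz: "norm w \<le> norm z" using segment_bound[OF w] by simp
        then have "norm (R w) \<le> e/2 * norm w" using zd Rb by simp
        also have "\<dots> \<le> e/2 * norm z" using wz e by (simp add: mult_left_mono)
        finally show "norm (R w) \<le> e/2 * norm z" .
      qed
      have hz: "hardy f z = contour_integral (linepath 0 z) f / z" using z0 by (simp add: hardy_def)
      have "(hardy f z - hardy f 0) / (z - 0) - L / 2 = J / z^2"
        using z0 by (simp add: hz J_def hardy_def field_simps power2_eq_square)
      then have "dist ((hardy f z - hardy f 0) / (z - 0)) (L / 2) = norm J / (norm z)^2"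
        by (simp add: dist_norm norm_divide norm_power)
      also have "\<dots> \<le> e/2" using bnd z0 by (simp add: field_simps power2_eq_square)
      also have "\<dots> < e" using e by simp
      finally show "dist ((hardy f z - hardy f 0) / (z - 0)) (L / 2) < e" .
    qed
    show "eventually (\<lambda>z. dist ((hardy f z - hardy f 0) / (z - 0)) (L / 2) < e) (at 0)"
      unfolding eventually_at using d key by blast
  qed
  then show ?thesis unfolding has_field_derivative_iff L_def by simp
qed


lemma hardy_iter:
  assumes all: "\<And>n. (hardy ^^ n) x \<in> fock_space p \<alpha> m"
  shows "(hardy ^^ n) x 0 = x 0 \<and> deriv ((hardy ^^ n) x) 0 = deriv x 0 / 2^n"
proof (induction n)
  case 0 then show ?case by simp
next
  case (Suc n)
  define F where "F = (hardy ^^ n) x"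
  have hol: "F holomorphic_on UNIV" using all[of n] by (simp add: F_def fock_space_def)
  have "deriv (hardy F) 0 = deriv F 0 / 2"
    by (rule DERIV_imp_deriv[OF hardy_deriv[OF hol]])
  moreover have "hardy F 0 = F 0" by (simp add: hardy_def)
  ultimately show ?case using Suc by (simp add: F_def)
qed

theorem corollary3:
  fixes p \<alpha> m :: real
  assumes "1 \<le> p" and "0 < \<alpha>" and "0 < m"
  shows "\<not> supercyclic_on (fock_space p \<alpha> m) (fock_norm p \<alpha> m) hardy"
proof
  assume "supercyclic_on (fock_space p \<alpha> m) (fock_norm p \<alpha> m) hardy"
  then obtain x where xX: "x \<in> fock_space p \<alpha> m" and all: "\<And>n. (hardy ^^ n) x \<in> fock_space p \<alpha> m"
    and dens: "\<And>g \<epsilon>. g \<in> fock_space p \<alpha> m \<Longrightarrow> \<epsilon> > 0 \<Longrightarrow> \<exists>n c. fock_norm p \<alpha> m (\<lambda>z. c * (hardy ^^ n) x z - g z) < \<epsilon>"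
    unfolding supercyclic_on_def by blast
  obtain K where K: "K > 0" and Kb: "\<And>h. h \<in> fock_space p \<alpha> m \<Longrightarrow> norm (h 0) \<le> K * fock_norm p \<alpha> m h \<and> norm (deriv h 0) \<le> K * fock_norm p \<alpha> m h"
    using point_bounds[OF assms] by blast
  define a0 where "a0 = x 0"
  define a1 where "a1 = deriv x 0"
  define M where "M = 2 * norm a1 / norm a0 + 1"
  define g where "g = (\<lambda>z::complex. 1 + complex_of_real M * z)"
  have gX: "g \<in> fock_space p \<alpha> m" unfolding g_def by (rule lin_in_fock[OF assms])
  have "1 / (2 * K) > 0" using K by simp
  then obtain n c where nc: "fock_norm p \<alpha> m (\<lambda>z. c * (hardy ^^ n) x z - g z) < 1 / (2 * K)"
    using dens[OF gX] by blast
  define F where "F = (hardy ^^ n) x"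
  define h where "h = (\<lambda>z. c * F z - g z)"
  have hX: "h \<in> fock_space p \<alpha> m" unfolding h_def F_def
    by (rule fock_comb[OF _ all gX]) (use assms in simp)
  have holF: "F holomorphic_on UNIV" using all[of n] by (simp add: F_def fock_space_def)
  have Fit: "F 0 = a0" "deriv F 0 = a1 / 2^n"
    using hardy_iter[OF all, of n] by (simp_all add: F_def a0_def a1_def)
  have small: "K * fock_norm p \<alpha> m h < 1/2"
    using nc K unfolding h_def F_def by (simp add: field_simps)
  have b0: "norm (h 0) < 1/2" and b1: "norm (deriv h 0) < 1/2"
    using Kb[OF hX] small by linarith+
  have h0: "h 0 = c * a0 - 1" by (simp add: h_def g_def Fit)
  have dF: "(F has_field_derivative deriv F 0) (at 0)"
    using holF by (meson DERIV_deriv_iff_field_differentiable UNIV_I open_UNIV holomorphic_on_imp_differentiable_at)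
  have "(h has_field_derivative (c * deriv F 0 - complex_of_real M)) (at 0)"
    unfolding h_def g_def by (rule derivative_eq_intros dF | simp)+
  then have h1: "deriv h 0 = c * (a1 / 2^n) - complex_of_real M"
    using Fit by (simp add: DERIV_imp_deriv)
  show False
  proof (cases "a0 = 0")
    case True
    then show False using b0 h0 by simp
  next
    case False
    then have na0: "norm a0 > 0" by simp
    have "norm c * norm a0 - 1 \<le> norm (c * a0 - 1)"
      using norm_triangle_ineq2[of "c * a0" 1] by (simp add: norm_mult)
    then have ca0: "norm c * norm a0 < 3/2" using b0 h0 by simp
    have t1: "norm (complex_of_real M) - norm (c * (a1 / 2^n)) \<le> norm (complex_of_real M - c * (a1 / 2^n))"
      by (rule norm_triangle_ineq2)
    have t2: "norm (c * (a1 / 2^n)) = norm c * (norm a1 / 2^n)"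
      by (simp add: norm_mult norm_divide norm_power)
    have t3: "norm (complex_of_real M - c * (a1 / 2^n)) = norm (c * (a1 / 2^n) - complex_of_real M)"
      by (rule norm_minus_commute)
    have t4: "M \<le> norm (complex_of_real M)" by simp
    have "M - norm c * (norm a1 / 2^n) \<le> norm (c * (a1 / 2^n) - complex_of_real M)"
      using t1 t2 t3 t4 by linarith
    then have "M < norm c * (norm a1 / 2^n) + 1/2" using b1 h1 by simp
    moreover have "norm c * (norm a1 / 2^n) \<le> norm c * norm a1"
    proof -
      have "norm a1 / 2^n \<le> norm a1" by (simp add: divide_le_eq_1 field_simps mult_le_cancel_left1)
      then show ?thesis by (rule mult_left_mono) simp
    qed
    moreover have "norm c * norm a1 \<le> 3/2 * norm a1 / norm a0"
    proof -
      have "norm c \<le> 3/2 / norm a0" using ca0 na0 by (simp add: field_simps)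
      then have "norm c * norm a1 \<le> 3/2 / norm a0 * norm a1" by (rule mult_right_mono) simp
      then show ?thesis by simp
    qed
    ultimately have "M < 3/2 * norm a1 / norm a0 + 1/2" by linarith
    moreover have "3/2 * norm a1 / norm a0 \<le> 2 * norm a1 / norm a0"
      by (rule divide_right_mono) (simp_all)
    ultimately show False unfolding M_def by linarith
  qed
qed

end
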